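(* Let $U\subset\mathbb{R}^3$ be open with coordinates $(p_1,p_2,p_3)$, let $\lambda_1,\lambda_2,\lambda_3$ be smooth real functions of one real variable, and let $f\colon U\to\mathbb{R}$ be smooth. For $\lambda\in\mathbb{R}$ define the $1$-form $$\alpha_\lambda=(\lambda-\lambda_2(p_2))(\lambda-\lambda_3(p_3))f_1dp_1+(\lambda-\lambda_1(p_1))(\lambda-\lambda_3(p_3))f_2dp_2+(\lambda-\lambda_1(p_1))(\lambda-\lambda_2(p_2))f_3dp_3 .$$ Then $\alpha_\lambda\wedge d\alpha_\lambda=0$ for all $\lambda\in\mathbb{R}$ if and only if $$(\lambda_2(p_2)-\lambda_3(p_3))f_1f_{23}+(\lambda_3(p_3)-\lambda_1(p_1))f_2f_{13}+(\lambda_1(p_1)-\lambda_2(p_2))f_3f_{12}=0\quad\text{on }U.$$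
   Context: $f_i=\partial f/\partial p_i$, $f_{ij}=\partial^2f/\partial p_i\partial p_j$; each $\lambda_i$ depends only on the coordinate $p_i$. *)

theory Defs
  imports "HOL-Analysis.Analysis"
begin

definition pd :: "3 \<Rightarrow> (real^3 \<Rightarrow> real) \<Rightarrow> real^3 \<Rightarrow> real" where
  "pd i g x = frechet_derivative g (at x) (axis i 1)"

fun Ck_on :: "nat \<Rightarrow> (real^3) set \<Rightarrow> (real^3 \<Rightarrow> real) \<Rightarrow> bool" where
  "Ck_on 0 U g = continuous_on U g"
| "Ck_on (Suc k) U g = (g differentiable_on U \<and> (\<forall>i. Ck_on k U (pd i g)))"

definition smooth_on :: "(real^3) set \<Rightarrow> (real^3 \<Rightarrow> real) \<Rightarrow> bool" where
  "smooth_on U g = (\<forall>k. Ck_on k U g)"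

fun Ck1 :: "nat \<Rightarrow> (real \<Rightarrow> real) \<Rightarrow> bool" where
  "Ck1 0 g = continuous_on UNIV g"
| "Ck1 (Suc k) g = (g differentiable_on UNIV \<and> Ck1 k (deriv g))"

definition smooth1 :: "(real \<Rightarrow> real) \<Rightarrow> bool" where
  "smooth1 g = (\<forall>k. Ck1 k g)"

text \<open>A 1-form a_1 dp_1 + a_2 dp_2 + a_3 dp_3 is given by its coefficient family a.
  The 3-form alpha wedge d alpha equals (wedge_d a) dp_1 wedge dp_2 wedge dp_3, where\<close>
definition wedge_d :: "(3 \<Rightarrow> real^3 \<Rightarrow> real) \<Rightarrow> real^3 \<Rightarrow> real" where
  "wedge_d a x =
     a 1 x * (pd 2 (a 3) x - pd 3 (a 2) x)
   + a 2 x * (pd 3 (a 1) x - pd 1 (a 3) x)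
   + a 3 x * (pd 1 (a 2) x - pd 2 (a 1) x)"

definition alpha :: "(3 \<Rightarrow> real \<Rightarrow> real) \<Rightarrow> (real^3 \<Rightarrow> real) \<Rightarrow> real \<Rightarrow> 3 \<Rightarrow> real^3 \<Rightarrow> real" where
  "alpha lam f l i p =
     (if i = 1 then (l - lam 2 (p$2)) * (l - lam 3 (p$3)) * pd 1 f p
      else if i = 2 then (l - lam 1 (p$1)) * (l - lam 3 (p$3)) * pd 2 f p
      else (l - lam 1 (p$1)) * (l - lam 2 (p$2)) * pd 3 f p)"

end

theory Submission
  imports Defs
begin

lemma pd_eq: "(g has_derivative g') (at x) \<Longrightarrow> pd i g x = g' (axis i 1)"
  unfolding pd_def using frechet_derivative_at by metis

lemma line_deriv:
  assumes "g differentiable at (a + s *\<^sub>R axis i 1)"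
  shows "((\<lambda>t. g (a + t *\<^sub>R axis i 1)) has_real_derivative pd i g (a + s *\<^sub>R axis i 1)) (at s)"
proof -
  let ?x = "a + s *\<^sub>R axis i 1"
  have g: "(g has_derivative frechet_derivative g (at ?x)) (at ?x)"
    using assms frechet_derivative_works by blast
  have l: "((\<lambda>t. a + t *\<^sub>R axis i (1::real)) has_derivative (\<lambda>t. t *\<^sub>R axis i 1)) (at s)"
    by (auto intro!: derivative_eq_intros)
  have "((\<lambda>t. g (a + t *\<^sub>R axis i 1)) has_derivative (\<lambda>t. frechet_derivative g (at ?x) (t *\<^sub>R axis i 1))) (at s)"
    using diff_chain_at[OF l g] by (simp add: o_def)
  moreover have "linear (frechet_derivative g (at ?x))"
    using g has_derivative_linear by blast
  ultimately have "((\<lambda>t. g (a + t *\<^sub>R axis i 1)) has_derivative (\<lambda>t. t * pd i g ?x)) (at s)"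
    unfolding pd_def by (simp add: linear_scale mult.commute)
  then show ?thesis unfolding has_field_derivative_def
    by (rule has_derivative_eq_rhs) (auto simp: mult.commute)
qed



lemma norm_two_axes: "norm (s *\<^sub>R axis i (1::real) + t *\<^sub>R axis j 1) \<le> \<bar>s\<bar> + \<bar>t\<bar>"
  by (rule order_trans[OF norm_triangle_ineq]) simp

lemma mvt2:
  fixes g :: "real^3 \<Rightarrow> real"
  assumes U: "ball p r \<subseteq> U" and gd: "g differentiable_on U" and gid: "pd i g differentiable_on U"
    and "open U" and h: "0 < h" "2 * h < r"
  shows "\<exists>\<xi>. dist \<xi> p < r \<and> dist \<xi> p < 2 * h \<and>
     g (p + h *\<^sub>R axis i 1 + h *\<^sub>R axis j 1) - g (p + h *\<^sub>R axis i 1) - g (p + h *\<^sub>R axis j 1) + g p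
       = h^2 * pd j (pd i g) \<xi>"
proof -
  let ?ei = "axis i (1::real)" and ?ej = "axis j (1::real)"
  have inU: "p + s *\<^sub>R ?ei + t *\<^sub>R ?ej \<in> U" if "0 \<le> s" "s \<le> h" "0 \<le> t" "t \<le> h" for s t
  proof -
    have "norm (s *\<^sub>R ?ei + t *\<^sub>R ?ej) < r" using norm_two_axes[of s i t j] that h by auto
    then have "p + s *\<^sub>R ?ei + t *\<^sub>R ?ej \<in> ball p r" by (simp add: dist_norm add.assoc) (metis minus_add_distrib norm_minus_cancel diff_conv_add_uminus)
    then show ?thesis using U by blast
  qed
  have gat: "g differentiable at x" if "x \<in> U" for x
    using gd that \<open>open U\<close> differentiable_on_eq_differentiable_at by blast
  have giat: "pd i g differentiable at x" if "x \<in> U" for x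
    using gid that \<open>open U\<close> differentiable_on_eq_differentiable_at by blast
  define u where "u s = g ((p + h *\<^sub>R ?ej) + s *\<^sub>R ?ei) - g (p + s *\<^sub>R ?ei)" for s
  have du: "DERIV u s :> (pd i g ((p + h *\<^sub>R ?ej) + s *\<^sub>R ?ei) - pd i g (p + s *\<^sub>R ?ei))"
    if "0 \<le> s" "s \<le> h" for s
  proof -
    have a: "(p + h *\<^sub>R ?ej) + s *\<^sub>R ?ei \<in> U" using inU[of s h] that h by (simp add: algebra_simps)
    have b: "p + s *\<^sub>R ?ei \<in> U" using inU[of s 0] that h by simp
    show ?thesis unfolding u_def
      by (intro DERIV_diff line_deriv gat a b)
  qed
  obtain s0 where s0: "0 < s0" "s0 < h"
    and eu: "u h - u 0 = (h - 0) * (pd i g ((p + h *\<^sub>R ?ej) + s0 *\<^sub>R ?ei) - pd i g (p + s0 *\<^sub>R ?ei))"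
    using MVT2[OF h(1) du] by blast
  define v where "v t = pd i g ((p + s0 *\<^sub>R ?ei) + t *\<^sub>R ?ej)" for t
  have dv: "DERIV v t :> pd j (pd i g) ((p + s0 *\<^sub>R ?ei) + t *\<^sub>R ?ej)" if "0 \<le> t" "t \<le> h" for t
  proof -
    have a: "(p + s0 *\<^sub>R ?ei) + t *\<^sub>R ?ej \<in> U" using inU[of s0 t] that s0 by simp
    show ?thesis unfolding v_def by (intro line_deriv giat a)
  qed
  obtain t0 where t0: "0 < t0" "t0 < h"
    and ev: "v h - v 0 = (h - 0) * pd j (pd i g) ((p + s0 *\<^sub>R ?ei) + t0 *\<^sub>R ?ej)"
    using MVT2[OF h(1) dv] by blast
  let ?xi = "(p + s0 *\<^sub>R ?ei) + t0 *\<^sub>R ?ej"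
  have "dist ?xi p \<le> s0 + t0"
    using norm_two_axes[of s0 i t0 j] s0 t0 by (simp add: dist_norm add.assoc)
  then have d: "dist ?xi p < 2 * h" "dist ?xi p < r" using s0 t0 h by auto
  have "pd i g ((p + h *\<^sub>R ?ej) + s0 *\<^sub>R ?ei) = v h" unfolding v_def by (simp add: algebra_simps)
  moreover have "pd i g (p + s0 *\<^sub>R ?ei) = v 0" unfolding v_def by simp
  moreover have "g (p + h *\<^sub>R ?ei + h *\<^sub>R ?ej) - g (p + h *\<^sub>R ?ei) - g (p + h *\<^sub>R ?ej) + g p = u h - u 0"
    unfolding u_def by (simp add: algebra_simps)
  ultimately have "g (p + h *\<^sub>R ?ei + h *\<^sub>R ?ej) - g (p + h *\<^sub>R ?ei) - g (p + h *\<^sub>R ?ej) + g p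
     = h^2 * pd j (pd i g) ?xi" using eu ev by (simp add: power2_eq_square)
  then show ?thesis using d by blast
qed


lemma clairaut:
  fixes g :: "real^3 \<Rightarrow> real"
  assumes "open U" and gd: "g differentiable_on U" and gid: "\<And>i. pd i g differentiable_on U"
    and cont: "\<And>i j. continuous_on U (pd j (pd i g))" and "p \<in> U"
  shows "pd j (pd i g) p = pd i (pd j g) p"
proof (rule ccontr)
  let ?F = "pd j (pd i g)" and ?G = "pd i (pd j g)"
  assume ne: "?F p \<noteq> ?G p"
  define e where "e = \<bar>?F p - ?G p\<bar> / 2"
  have e: "e > 0" using ne by (simp add: e_def)
  obtain r where r: "r > 0" "ball p r \<subseteq> U" using \<open>open U\<close> \<open>p \<in> U\<close> open_contains_ball by blast
  have C1: "\<exists>d>0. \<forall>x'\<in>U. dist x' p < d \<longrightarrow> dist (?F x') (?F p) < e"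
    using cont[where i=i and j=j] unfolding continuous_on_iff using \<open>p \<in> U\<close> e by simp
  have C2: "\<exists>d>0. \<forall>x'\<in>U. dist x' p < d \<longrightarrow> dist (?G x') (?G p) < e"
    using cont[where i=j and j=i] unfolding continuous_on_iff using \<open>p \<in> U\<close> e by simp
  obtain d1 where d1: "d1 > 0" and d1': "\<forall>x'\<in>U. dist x' p < d1 \<longrightarrow> dist (?F x') (?F p) < e"
    using C1 by (elim exE conjE)
  obtain d2 where d2: "d2 > 0" and d2': "\<forall>x'\<in>U. dist x' p < d2 \<longrightarrow> dist (?G x') (?G p) < e"
    using C2 by (elim exE conjE)
  define h where "h = min (min d1 d2) r / 4"
  have h: "0 < h" "2 * h < r" "2 * h < d1" "2 * h < d2" using r d1 d2 by (auto simp: h_def)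
  obtain x where x: "dist x p < r" "dist x p < 2 * h" and ex:
    "g (p + h *\<^sub>R axis i 1 + h *\<^sub>R axis j 1) - g (p + h *\<^sub>R axis i 1) - g (p + h *\<^sub>R axis j 1) + g p
       = h^2 * ?F x"
    using mvt2[OF r(2) gd gid \<open>open U\<close> h(1,2)] by blast
  obtain y where y: "dist y p < r" "dist y p < 2 * h" and ey:
    "g (p + h *\<^sub>R axis j 1 + h *\<^sub>R axis i 1) - g (p + h *\<^sub>R axis j 1) - g (p + h *\<^sub>R axis i 1) + g p
       = h^2 * ?G y"
    using mvt2[OF r(2) gd gid \<open>open U\<close> h(1,2), where i=j and j=i] by blast
  have sw: "p + h *\<^sub>R axis j 1 + h *\<^sub>R axis i 1 = p + h *\<^sub>R axis i 1 + h *\<^sub>R axis j (1::real)"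
    by (simp add: add_ac)
  have "h^2 * ?F x = h^2 * ?G y" using ex ey unfolding sw by linarith
  then have xy: "?F x = ?G y" using h by simp
  have "x \<in> ball p r" "y \<in> ball p r" using x(1) y(1) by (simp_all add: dist_commute)
  then have xU: "x \<in> U" "y \<in> U" using r(2) by blast+
  have "dist (?F x) (?F p) < e" using d1'[rule_format, OF xU(1)] x h by simp
  moreover have "dist (?G y) (?G p) < e" using d2'[rule_format, OF xU(2)] y h by simp
  ultimately have "\<bar>?F p - ?G p\<bar> < 2 * e" using xy by (simp add: dist_real_def)
  then show False by (simp add: e_def)
qed


lemma pd_mult3:
  assumes "(u has_derivative u') (at x)" "(v has_derivative v') (at x)" "w differentiable at x"
  shows "pd i (\<lambda>q. u q * v q * w q) x
     = u' (axis i 1) * v x * w x + u x * v' (axis i 1) * w x + u x * v x * pd i w x"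
proof -
  have w: "(w has_derivative frechet_derivative w (at x)) (at x)"
    using assms(3) frechet_derivative_works by blast
  have "((\<lambda>q. u q * v q * w q) has_derivative
     (\<lambda>h. (u x * v x) * frechet_derivative w (at x) h + (u x * v' h + u' h * v x) * w x)) (at x)"
    by (intro has_derivative_mult assms w)
  from pd_eq[OF this, of i] show ?thesis by (simp add: pd_def algebra_simps)
qed

lemma c_deriv:
  fixes lam :: "real \<Rightarrow> real"
  assumes "lam differentiable at (p$k)"
  shows "((\<lambda>q::real^3. l - lam (q$k)) has_derivative (\<lambda>h. - (deriv lam (p$k) * h$k))) (at p)"
proof -
  have d: "(lam has_derivative (\<lambda>t. deriv lam (p$k) * t)) (at (p$k))"
    using assms DERIV_deriv_iff_real_differentiable has_field_derivative_def by blast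
  have n: "((\<lambda>q::real^3. q$k) has_derivative (\<lambda>h. h$k)) (at p)"
    by (rule bounded_linear_imp_has_derivative[OF bounded_linear_vec_nth])
  have "((\<lambda>q::real^3. lam (q$k)) has_derivative (\<lambda>h. deriv lam (p$k) * h$k)) (at p)"
    using diff_chain_at[OF n d] by (simp add: o_def)
  then have "((\<lambda>q::real^3. l - lam (q$k)) has_derivative (\<lambda>h. 0 - deriv lam (p$k) * h$k)) (at p)"
    by (intro has_derivative_diff has_derivative_const)
  then show ?thesis by simp
qed

lemma wedge_formula:
  fixes lam :: "3 \<Rightarrow> real \<Rightarrow> real" and f :: "real^3 \<Rightarrow> real"
  assumes lamd: "\<And>k x. lam k differentiable at x"
    and fd: "\<And>i. pd i f differentiable at p"
    and s12: "pd 1 (pd 2 f) p = pd 2 (pd 1 f) p"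
    and s13: "pd 1 (pd 3 f) p = pd 3 (pd 1 f) p"
    and s23: "pd 2 (pd 3 f) p = pd 3 (pd 2 f) p"
  shows "wedge_d (alpha lam f l) p =
     - ((l - lam 1 (p$1)) * (l - lam 2 (p$2)) * (l - lam 3 (p$3))) *
       ((lam 2 (p$2) - lam 3 (p$3)) * pd 1 f p * pd 3 (pd 2 f) p
               + (lam 3 (p$3) - lam 1 (p$1)) * pd 2 f p * pd 3 (pd 1 f) p
               + (lam 1 (p$1) - lam 2 (p$2)) * pd 3 f p * pd 2 (pd 1 f) p)"
proof -
  have a1: "alpha lam f l 1 = (\<lambda>q. (l - lam 2 (q$2)) * (l - lam 3 (q$3)) * pd 1 f q)"
    by (rule ext) (simp add: alpha_def)
  have a2: "alpha lam f l 2 = (\<lambda>q. (l - lam 1 (q$1)) * (l - lam 3 (q$3)) * pd 2 f q)"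
    by (rule ext) (simp add: alpha_def)
  have a3: "alpha lam f l 3 = (\<lambda>q. (l - lam 1 (q$1)) * (l - lam 2 (q$2)) * pd 3 f q)"
    by (rule ext) (simp add: alpha_def)
  have cd: "\<And>k. ((\<lambda>q. l - lam k (q$k)) has_derivative (\<lambda>h. -(deriv (lam k) (p$k) * h$k))) (at p)"
    by (rule c_deriv[OF lamd])
  note P1 = pd_mult3[OF cd[of 2] cd[of 3] fd[of 1], folded a1]
  note P2 = pd_mult3[OF cd[of 1] cd[of 3] fd[of 2], folded a2]
  note P3 = pd_mult3[OF cd[of 1] cd[of 2] fd[of 3], folded a3]
  show ?thesis
    unfolding wedge_d_def P1 P2 P3
    apply (simp add: a1 a2 a3 s12 s13 s23 axis_def)
    apply (simp add: algebra_simps)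
    done

qed


theorem mainTheorem4:
  fixes U :: "(real^3) set" and lam :: "3 \<Rightarrow> real \<Rightarrow> real" and f :: "real^3 \<Rightarrow> real"
  assumes "open U"
    and "\<And>i. smooth1 (lam i)"
    and "smooth_on U f"
  shows "(\<forall>l::real. \<forall>p\<in>U. wedge_d (alpha lam f l) p = 0) \<longleftrightarrow>
         (\<forall>p\<in>U. (lam 2 (p$2) - lam 3 (p$3)) * pd 1 f p * pd 3 (pd 2 f) p
               + (lam 3 (p$3) - lam 1 (p$1)) * pd 2 f p * pd 3 (pd 1 f) p
               + (lam 1 (p$1) - lam 2 (p$2)) * pd 3 f p * pd 2 (pd 1 f) p = 0)"
proof -
  have lamd: "\<And>k x. lam k differentiable at x"
  proof -
    fix k x
    have "Ck1 (Suc 0) (lam k)" using assms(2)[of k] unfolding smooth1_def by blast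
    then have "lam k differentiable_on UNIV" by simp
    then show "lam k differentiable at x" by (simp add: differentiable_on_eq_differentiable_at)
  qed
  have C2: "Ck_on (Suc (Suc 0)) U f" using assms(3) unfolding smooth_on_def by blast
  then have C2': "f differentiable_on U \<and> (\<forall>i. pd i f differentiable_on U \<and> (\<forall>j. continuous_on U (pd j (pd i f))))"
    by simp
  have fdU: "f differentiable_on U" and fidU: "\<And>i. pd i f differentiable_on U"
    and fcont: "\<And>i j. continuous_on U (pd j (pd i f))" using C2' by blast+
  define E where "E (p::real^3) = (lam 2 (p$2) - lam 3 (p$3)) * pd 1 f p * pd 3 (pd 2 f) p
               + (lam 3 (p$3) - lam 1 (p$1)) * pd 2 f p * pd 3 (pd 1 f) p
               + (lam 1 (p$1) - lam 2 (p$2)) * pd 3 f p * pd 2 (pd 1 f) p" for p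
  define P where "P l (p::real^3) = (l - lam 1 (p$1)) * (l - lam 2 (p$2)) * (l - lam 3 (p$3))" for l p
  have W: "wedge_d (alpha lam f l) p = - P l p * E p" if "p \<in> U" for l p
    unfolding P_def E_def
  proof (rule wedge_formula[OF lamd])
    show "\<And>i. pd i f differentiable at p"
      using fidU that \<open>open U\<close> differentiable_on_eq_differentiable_at by blast
    show "pd 1 (pd 2 f) p = pd 2 (pd 1 f) p" "pd 1 (pd 3 f) p = pd 3 (pd 1 f) p"
      "pd 2 (pd 3 f) p = pd 3 (pd 2 f) p"
      by (rule clairaut[OF \<open>open U\<close> fdU fidU fcont that])+
  qed
  have "(\<forall>l::real. \<forall>p\<in>U. wedge_d (alpha lam f l) p = 0) \<longleftrightarrow> (\<forall>p\<in>U. E p = 0)"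
  proof
    assume H: "\<forall>l::real. \<forall>p\<in>U. wedge_d (alpha lam f l) p = 0"
    show "\<forall>p\<in>U. E p = 0"
    proof
      fix p assume p: "p \<in> U"
      define l where "l = \<bar>lam 1 (p$1)\<bar> + \<bar>lam 2 (p$2)\<bar> + \<bar>lam 3 (p$3)\<bar> + 1"
      have "l - lam 1 (p$1) > 0" "l - lam 2 (p$2) > 0" "l - lam 3 (p$3) > 0"
        unfolding l_def by linarith+
      then have Pn: "P l p \<noteq> 0" unfolding P_def by simp
      from H p have "wedge_d (alpha lam f l) p = 0" by blast
      then have "- P l p * E p = 0" using W[OF p, of l] by linarith
      then show "E p = 0" using Pn by simp
    qed
  next
    assume H: "\<forall>p\<in>U. E p = 0"
    show "\<forall>l::real. \<forall>p\<in>U. wedge_d (alpha lam f l) p = 0"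
    proof (intro allI ballI)
      fix l p assume p: "p \<in> U"
      show "wedge_d (alpha lam f l) p = 0" using W[OF p, of l] H p by simp
    qed
  qed
  then show ?thesis unfolding E_def .
qed

end
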